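(* Let $\hat{\mathbf{P}}\in\mathbb{R}^{N\times N}$ be a matrix with nonnegative entries, columns summing to $1$, and $\hat{\mathbf{P}}\boldsymbol\mu=\boldsymbol\mu$, such that $\langle\hat{\mathbf{P}},\mathbf{P}\rangle_\mu\ge2\|\boldsymbol\mu\|^2$ and $c'\|\mathbf{P}\|_\mu^2\le\|\hat{\mathbf{P}}\|_\mu^2\le C'\|\mathbf{P}\|_\mu^2$ for constants $0<c'\le C'$. Let $\mathbf{V}=\theta\hat{\mathbf{P}}+(1-\theta)\boldsymbol\mu\mathbf{1}^\top$ for some $\theta\in(0,1)$. Then there are constants $c_1,c_2,c_3>0$ depending only on $C$ and $C'$ such that $$\alpha_V\in\Big[c_1\frac{\theta}{NK_P},\;c_2\theta\Big]\quad\text{and}\quad\|\boldsymbol\Delta_V\|_\mu^2\le c_3\theta^2K_P.$$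
   Context: $\boldsymbol\mu\in\mathbb{R}^N$ is a probability vector with $\mu_k\in[1/(CN),C/N]$ for all $k$, for a constant $C\ge1$. $\mathbf{P}\in\mathbb{R}^{N\times N}$ has nonnegative entries, columns summing to $1$, $\mathbf{P}\boldsymbol\mu=\boldsymbol\mu$, and satisfies $\|\mathbf{P}\|_\mu^2-\|\boldsymbol\mu\|^2\ge\|\boldsymbol\mu\|^2$. $\langle\mathbf{M},\mathbf{M}'\rangle_\mu=\operatorname{Tr}(\mathbf{M}\operatorname{diag}(\boldsymbol\mu)\mathbf{M}'^\top)$, $\|\mathbf{M}\|_\mu^2=\langle\mathbf{M},\mathbf{M}\rangle_\mu$; $\|\boldsymbol\mu\|$ Euclidean. $K_P=\|\mathbf{P}\|_\mu^2-\|\boldsymbol\mu\|^2$, $\alpha_V=(\langle\mathbf{V},\mathbf{P}\rangle_\mu-\|\boldsymbol\mu\|^2)/K_P$, $\boldsymbol\Delta_V=\mathbf{V}-\alpha_V\mathbf{P}-(1-\alpha_V)\boldsymbol\mu\mathbf{1}^\top$. *)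

theory Defs
  imports Complex_Main
begin

text \<open>Vectors in R^N are functions nat => real (indices 0..N-1), N x N matrices
are functions nat => nat => real (entry M i k = row i, column k).\<close>

definition prob_vec :: "nat \<Rightarrow> (nat \<Rightarrow> real) \<Rightarrow> bool" where
  "prob_vec N mu \<longleftrightarrow> (\<forall>k<N. mu k \<ge> 0) \<and> (\<Sum>k<N. mu k) = 1"

definition stoch_fix :: "nat \<Rightarrow> (nat \<Rightarrow> real) \<Rightarrow> (nat \<Rightarrow> nat \<Rightarrow> real) \<Rightarrow> bool" where
  "stoch_fix N mu M \<longleftrightarrow> (\<forall>i<N. \<forall>k<N. M i k \<ge> 0)
      \<and> (\<forall>k<N. (\<Sum>i<N. M i k) = 1)
      \<and> (\<forall>i<N. (\<Sum>k<N. M i k * mu k) = mu i)"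

text \<open>Tr(M diag(mu) M'^T) = sum_{i,k} M i k * mu k * M' i k\<close>
definition mu_inner :: "nat \<Rightarrow> (nat \<Rightarrow> real) \<Rightarrow> (nat \<Rightarrow> nat \<Rightarrow> real) \<Rightarrow> (nat \<Rightarrow> nat \<Rightarrow> real) \<Rightarrow> real" where
  "mu_inner N mu M M' = (\<Sum>i<N. \<Sum>k<N. M i k * mu k * M' i k)"

definition mu_norm_sq :: "nat \<Rightarrow> (nat \<Rightarrow> real) \<Rightarrow> (nat \<Rightarrow> nat \<Rightarrow> real) \<Rightarrow> real" where
  "mu_norm_sq N mu M = mu_inner N mu M M"

definition vec_norm_sq :: "nat \<Rightarrow> (nat \<Rightarrow> real) \<Rightarrow> real" where
  "vec_norm_sq N v = (\<Sum>i<N. (v i)^2)"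

definition K_of :: "nat \<Rightarrow> (nat \<Rightarrow> real) \<Rightarrow> (nat \<Rightarrow> nat \<Rightarrow> real) \<Rightarrow> real" where
  "K_of N mu P = mu_norm_sq N mu P - vec_norm_sq N mu"

definition alpha_of :: "nat \<Rightarrow> (nat \<Rightarrow> real) \<Rightarrow> (nat \<Rightarrow> nat \<Rightarrow> real) \<Rightarrow> (nat \<Rightarrow> nat \<Rightarrow> real) \<Rightarrow> real" where
  "alpha_of N mu P V = (mu_inner N mu V P - vec_norm_sq N mu) / K_of N mu P"

definition Delta_of :: "nat \<Rightarrow> (nat \<Rightarrow> real) \<Rightarrow> (nat \<Rightarrow> nat \<Rightarrow> real) \<Rightarrow> (nat \<Rightarrow> nat \<Rightarrow> real) \<Rightarrow> nat \<Rightarrow> nat \<Rightarrow> real" where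
  "Delta_of N mu P V = (\<lambda>i k. V i k - alpha_of N mu P V * P i k - (1 - alpha_of N mu P V) * mu i)"

end

theory Submission
  imports Defs
begin

lemma ab_le: "(x::real)*y \<le> (x^2+y^2)/2"
proof -
  have "0 \<le> (x-y)^2" by simp
  thus ?thesis by (simp add: power2_eq_square algebra_simps)
qed
lemma sq_diff: "((x::real)-y)^2 \<le> 2*x^2+2*y^2"
proof -
  have "0 \<le> (x+y)^2" by simp
  thus ?thesis by (simp add: power2_eq_square algebra_simps)
qed

lemma sumU:
  assumes "prob_vec N mu"
  shows "(\<Sum>i<N. \<Sum>k<N. mu i * mu k * mu i) = vec_norm_sq N mu"
proof -
  have "(\<Sum>i<N. \<Sum>k<N. mu i * mu k * mu i) = (\<Sum>i<N. (mu i)^2 * (\<Sum>k<N. mu k))"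
    by (simp add: sum_distrib_left power2_eq_square mult.commute mult.left_commute)
  also have "\<dots> = vec_norm_sq N mu" using assms by (simp add: prob_vec_def vec_norm_sq_def)
  finally show ?thesis .
qed

lemma sumMU:
  assumes "stoch_fix N mu M"
  shows "(\<Sum>i<N. \<Sum>k<N. M i k * mu k * mu i) = vec_norm_sq N mu"
proof -
  have "(\<Sum>i<N. \<Sum>k<N. M i k * mu k * mu i) = (\<Sum>i<N. mu i * (\<Sum>k<N. M i k * mu k))"
    by (simp add: sum_distrib_left mult.commute mult.left_commute)
  also have "\<dots> = (\<Sum>i<N. mu i * mu i)"
    using assms by (simp add: stoch_fix_def)
  also have "\<dots> = vec_norm_sq N mu" by (simp add: vec_norm_sq_def power2_eq_square)
  finally show ?thesis .
qed

lemma main: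
  fixes C C' c' \<theta> :: real
  assumes C: "C \<ge> 1" and pv: "prob_vec N mu"
    and mub: "\<forall>k<N. 1 / (C * real N) \<le> mu k \<and> mu k \<le> C / real N"
    and sP: "stoch_fix N mu P"
    and Kge: "mu_norm_sq N mu P - vec_norm_sq N mu \<ge> vec_norm_sq N mu"
    and sPh: "stoch_fix N mu Ph"
    and inn: "mu_inner N mu Ph P \<ge> 2 * vec_norm_sq N mu"
    and c'C: "0 < c'" "c' \<le> C'"
    and up: "mu_norm_sq N mu Ph \<le> C' * mu_norm_sq N mu P"
    and th: "0 < \<theta>" "\<theta> < 1"
    and V: "V = (\<lambda>i k. \<theta> * Ph i k + (1 - \<theta>) * mu i)"
  shows "(1/C^2) * \<theta> / (real N * K_of N mu P) \<le> alpha_of N mu P V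
     \<and> alpha_of N mu P V \<le> (C'+1) * \<theta>
     \<and> mu_norm_sq N mu (Delta_of N mu P V) \<le> (8*C' + 4 + 12*(C'+1)^2) * \<theta>^2 * K_of N mu P"
proof -
  define m where "m = vec_norm_sq N mu"
  define K where "K = K_of N mu P"
  define a where "a = alpha_of N mu P V"
  have mu0: "\<forall>k<N. mu k \<ge> 0" using pv by (simp add: prob_vec_def)
  have N0: "N > 0" using pv by (cases N) (auto simp: prob_vec_def)
  have mlow: "m \<ge> 1 / (C^2 * real N)"
  proof -
    have "(\<Sum>i<N. (1 / (C * real N))^2) \<le> (\<Sum>i<N. (mu i)^2)"
      apply (rule sum_mono)
      using mub C N0 by (intro power_mono) auto
    moreover have "(\<Sum>i<N. (1 / (C * real N))^2) = 1 / (C^2 * real N)"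
      using N0 by (simp add: power2_eq_square field_simps)
    ultimately show ?thesis by (simp add: m_def vec_norm_sq_def)
  qed
  have mpos: "m > 0" using mlow C N0 proof -
    have "C^2 * real N > 0" using C N0 by simp
    hence "1 / (C^2 * real N) > 0" by simp
    thus ?thesis using mlow by linarith
  qed
  have KK: "K \<ge> m" using Kge by (simp add: K_def K_of_def m_def)
  have Kpos: "K > 0" using KK mpos by simp
  have PK: "mu_norm_sq N mu P = K + m" by (simp add: K_def K_of_def m_def)
  have numV: "mu_inner N mu V P - m = \<theta> * (mu_inner N mu Ph P - m)"
  proof -
    have "mu_inner N mu V P = (\<Sum>i<N. \<Sum>k<N. \<theta> * (Ph i k * mu k * P i k) + (1-\<theta>) * (P i k * mu k * mu i))"
      unfolding mu_inner_def V by (intro sum.cong refl) (simp add: algebra_simps)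
    also have "\<dots> = \<theta> * mu_inner N mu Ph P + (1-\<theta>) * (\<Sum>i<N. \<Sum>k<N. P i k * mu k * mu i)"
      by (simp add: mu_inner_def sum.distrib sum_distrib_left)
    also have "\<dots> = \<theta> * mu_inner N mu Ph P + (1-\<theta>) * m"
      using sumMU[OF sP] by (simp add: m_def)
    finally show ?thesis by (simp add: algebra_simps)
  qed
  have aeq: "a = \<theta> * (mu_inner N mu Ph P - m) / K"
    using numV by (simp add: a_def alpha_of_def K_def m_def)
  have a_low: "(1/C^2) * \<theta> / (real N * K) \<le> a"
  proof -
    have "(1/C^2) * \<theta> / (real N * K) = \<theta> * (1 / (C^2 * real N)) / K"
      by (simp add: field_simps)
    also have "\<dots> \<le> \<theta> * (mu_inner N mu Ph P - m) / K"
      using mlow inn th Kpos by (intro divide_right_mono mult_left_mono) (auto simp: m_def)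
    finally show ?thesis using aeq by simp
  qed
  have cross: "mu_inner N mu Ph P \<le> (mu_norm_sq N mu Ph + mu_norm_sq N mu P) / 2"
  proof -
    have "mu_inner N mu Ph P \<le> (\<Sum>i<N. \<Sum>k<N. ((Ph i k)^2 * mu k + (P i k)^2 * mu k) / 2)"
      unfolding mu_inner_def
    proof (intro sum_mono)
      fix i k assume "k \<in> {..<N}"
      hence "mu k \<ge> 0" using mu0 by auto
      moreover have "Ph i k * P i k \<le> ((Ph i k)^2 + (P i k)^2)/2"
        using ab_le[of "Ph i k" "P i k"] by simp
      ultimately have "Ph i k * P i k * mu k \<le> ((Ph i k)^2 + (P i k)^2)/2 * mu k"
        by (rule mult_right_mono[rotated])
      thus "Ph i k * mu k * P i k \<le> ((Ph i k)^2 * mu k + (P i k)^2 * mu k) / 2"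
        by (simp add: algebra_simps)
    qed
    also have "\<dots> = (mu_norm_sq N mu Ph + mu_norm_sq N mu P) / 2"
      by (simp add: mu_norm_sq_def mu_inner_def sum.distrib power2_eq_square mult_ac
            flip: sum_divide_distrib)
    finally show ?thesis .
  qed
  have Cp: "C' > 0" using c'C by simp
  have a_up0: "mu_inner N mu Ph P - m \<le> (C'+1) * K"
  proof -
    have "mu_inner N mu Ph P \<le> (C' * (K+m) + (K+m)) / 2" using cross up PK by simp
    moreover have "(C'+1) * m \<le> (C'+1) * K" using KK Cp by (intro mult_left_mono) auto
    ultimately show ?thesis using mpos by (simp add: algebra_simps)
  qed
  have a_up: "a \<le> (C'+1) * \<theta>"
  proof -
    have "a \<le> \<theta> * ((C'+1) * K) / K"
      unfolding aeq using a_up0 th Kpos by (intro divide_right_mono mult_left_mono) auto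
    thus ?thesis using Kpos by (simp add: mult.commute)
  qed
  have a0: "a \<ge> 0" using aeq inn mpos th Kpos by (simp add: m_def)
  have a2: "a^2 \<le> (C'+1)^2 * \<theta>^2"
    using a_up a0 by (metis power_mono power_mult_distrib)
  have U: "(\<Sum>i<N. \<Sum>k<N. mu i * mu k * mu i) = m" using sumU[OF pv] by (simp add: m_def)
  have D: "mu_norm_sq N mu (Delta_of N mu P V) \<le>
      4 * \<theta>^2 * mu_norm_sq N mu Ph + 4 * \<theta>^2 * m + 4 * a^2 * mu_norm_sq N mu P + 4 * a^2 * m"
  proof -
    have "mu_norm_sq N mu (Delta_of N mu P V) \<le>
       (\<Sum>i<N. \<Sum>k<N. 4 * \<theta>^2 * (Ph i k * mu k * Ph i k) + 4 * \<theta>^2 * (mu i * mu k * mu i)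
            + 4 * a^2 * (P i k * mu k * P i k) + 4 * a^2 * (mu i * mu k * mu i))"
      unfolding mu_norm_sq_def mu_inner_def
    proof (intro sum_mono)
      fix i k assume "k \<in> {..<N}"
      hence mk: "mu k \<ge> 0" using mu0 by auto
      have eq: "Delta_of N mu P V i k = \<theta> * (Ph i k - mu i) - a * (P i k - mu i)"
        by (simp add: Delta_of_def V a_def algebra_simps)
      have "(\<theta> * (Ph i k - mu i) - a * (P i k - mu i))^2
         \<le> 4 * \<theta>^2 * (Ph i k)^2 + 4 * \<theta>^2 * (mu i)^2 + 4 * a^2 * (P i k)^2 + 4 * a^2 * (mu i)^2"
      proof -
        define x where "x = \<theta> * (Ph i k - mu i)"
        define y where "y = a * (P i k - mu i)"
        have "(x - y)^2 \<le> 2*x^2 + 2*y^2" by (rule sq_diff)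
        moreover have "x^2 \<le> 2 * \<theta>^2 * (Ph i k)^2 + 2 * \<theta>^2 * (mu i)^2"
        proof -
          have "(Ph i k - mu i)^2 \<le> 2 * (Ph i k)^2 + 2 * (mu i)^2"
            by (rule sq_diff)
          hence "\<theta>^2 * (Ph i k - mu i)^2 \<le> \<theta>^2 * (2 * (Ph i k)^2 + 2 * (mu i)^2)"
            by (intro mult_left_mono) auto
          moreover have "x^2 = \<theta>^2 * (Ph i k - mu i)^2" by (simp add: x_def power_mult_distrib)
          ultimately show ?thesis by (simp add: algebra_simps)
        qed
        moreover have "y^2 \<le> 2 * a^2 * (P i k)^2 + 2 * a^2 * (mu i)^2"
        proof -
          have "(P i k - mu i)^2 \<le> 2 * (P i k)^2 + 2 * (mu i)^2"
            by (rule sq_diff)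
          hence "a^2 * (P i k - mu i)^2 \<le> a^2 * (2 * (P i k)^2 + 2 * (mu i)^2)"
            by (intro mult_left_mono) auto
          moreover have "y^2 = a^2 * (P i k - mu i)^2" by (simp add: y_def power_mult_distrib)
          ultimately show ?thesis by (simp add: algebra_simps)
        qed
        ultimately show ?thesis by (simp add: x_def y_def)
      qed
      hence "(\<theta> * (Ph i k - mu i) - a * (P i k - mu i))^2 * mu k
         \<le> (4 * \<theta>^2 * (Ph i k)^2 + 4 * \<theta>^2 * (mu i)^2 + 4 * a^2 * (P i k)^2 + 4 * a^2 * (mu i)^2) * mu k"
        using mk by (rule mult_right_mono)
      thus "Delta_of N mu P V i k * mu k * Delta_of N mu P V i k
         \<le> 4 * \<theta>^2 * (Ph i k * mu k * Ph i k) + 4 * \<theta>^2 * (mu i * mu k * mu i)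
            + 4 * a^2 * (P i k * mu k * P i k) + 4 * a^2 * (mu i * mu k * mu i)"
        unfolding eq by (simp add: power2_eq_square algebra_simps)
    qed
    also have "\<dots> = 4 * \<theta>^2 * mu_norm_sq N mu Ph + 4 * \<theta>^2 * (\<Sum>i<N. \<Sum>k<N. mu i * mu k * mu i)
        + 4 * a^2 * mu_norm_sq N mu P + 4 * a^2 * (\<Sum>i<N. \<Sum>k<N. mu i * mu k * mu i)"
      by (simp add: mu_norm_sq_def mu_inner_def sum.distrib sum_distrib_left)
    finally show ?thesis using U by simp
  qed
  have t2: "\<theta>^2 \<ge> 0" by simp
  have D2: "mu_norm_sq N mu (Delta_of N mu P V) \<le> (8*C' + 4 + 12*(C'+1)^2) * \<theta>^2 * K"
  proof -
    have h1: "4 * \<theta>^2 * mu_norm_sq N mu Ph \<le> 4 * \<theta>^2 * (2*C'*K)"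
    proof -
      have "C' * m \<le> C' * K" using KK Cp by (intro mult_left_mono) auto
      hence "mu_norm_sq N mu Ph \<le> 2*C'*K" using up PK by (simp add: algebra_simps)
      thus ?thesis by (intro mult_left_mono) auto
    qed
    have h2: "4 * \<theta>^2 * m \<le> 4 * \<theta>^2 * K" using KK by (intro mult_left_mono) auto
    have h3: "4 * a^2 * mu_norm_sq N mu P \<le> 4 * ((C'+1)^2 * \<theta>^2) * (2*K)"
      using a2 PK KK mpos by (intro mult_mono) auto
    have h4: "4 * a^2 * m \<le> 4 * ((C'+1)^2 * \<theta>^2) * K"
      using a2 KK mpos by (intro mult_mono) auto
    have "4 * \<theta>^2 * (2*C'*K) + 4 * \<theta>^2 * K + 4 * ((C'+1)^2 * \<theta>^2) * (2*K) + 4 * ((C'+1)^2 * \<theta>^2) * K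
        = (8*C' + 4 + 12*(C'+1)^2) * \<theta>^2 * K" by (simp add: algebra_simps)
    thus ?thesis using D h1 h2 h3 h4 by linarith
  qed
  show ?thesis using a_low a_up D2 by (simp add: a_def K_def)
qed

theorem lemmaH1:
  fixes C C' :: real
  assumes "C \<ge> 1" and "C' > 0"
  shows "\<exists>c1 c2 c3 :: real. c1 > 0 \<and> c2 > 0 \<and> c3 > 0 \<and>
    (\<forall>(N::nat) (mu::nat \<Rightarrow> real) (P::nat \<Rightarrow> nat \<Rightarrow> real) (Ph::nat \<Rightarrow> nat \<Rightarrow> real) (c'::real) (\<theta>::real).
       prob_vec N mu
     \<and> (\<forall>k<N. 1 / (C * real N) \<le> mu k \<and> mu k \<le> C / real N)
     \<and> stoch_fix N mu P
     \<and> mu_norm_sq N mu P - vec_norm_sq N mu \<ge> vec_norm_sq N mu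
     \<and> stoch_fix N mu Ph
     \<and> mu_inner N mu Ph P \<ge> 2 * vec_norm_sq N mu
     \<and> 0 < c' \<and> c' \<le> C'
     \<and> c' * mu_norm_sq N mu P \<le> mu_norm_sq N mu Ph
     \<and> mu_norm_sq N mu Ph \<le> C' * mu_norm_sq N mu P
     \<and> 0 < \<theta> \<and> \<theta> < 1
     \<longrightarrow> (let V = (\<lambda>i k. \<theta> * Ph i k + (1 - \<theta>) * mu i);
              K = K_of N mu P;
              a = alpha_of N mu P V
          in c1 * \<theta> / (real N * K) \<le> a \<and> a \<le> c2 * \<theta>
           \<and> mu_norm_sq N mu (Delta_of N mu P V) \<le> c3 * \<theta>^2 * K))"
    proof -
    have "0 < 8 * C' + 4 + 12 * (C' + 1)^2" using assms by (simp add: add_pos_nonneg)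
    moreover have "0 < 1/C^2" using assms by simp
    moreover have "0 < C' + 1" using assms by simp
    moreover have F: "\<forall>(N::nat) (mu::nat \<Rightarrow> real) (P::nat \<Rightarrow> nat \<Rightarrow> real) (Ph::nat \<Rightarrow> nat \<Rightarrow> real) (c'::real) (\<theta>::real).
       prob_vec N mu
     \<and> (\<forall>k<N. 1 / (C * real N) \<le> mu k \<and> mu k \<le> C / real N)
     \<and> stoch_fix N mu P
     \<and> mu_norm_sq N mu P - vec_norm_sq N mu \<ge> vec_norm_sq N mu
     \<and> stoch_fix N mu Ph
     \<and> mu_inner N mu Ph P \<ge> 2 * vec_norm_sq N mu
     \<and> 0 < c' \<and> c' \<le> C'
     \<and> c' * mu_norm_sq N mu P \<le> mu_norm_sq N mu Ph
     \<and> mu_norm_sq N mu Ph \<le> C' * mu_norm_sq N mu P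
     \<and> 0 < \<theta> \<and> \<theta> < 1
     \<longrightarrow> (let V = (\<lambda>i k. \<theta> * Ph i k + (1 - \<theta>) * mu i);
              K = K_of N mu P;
              a = alpha_of N mu P V
          in (1/C^2) * \<theta> / (real N * K) \<le> a \<and> a \<le> (C'+1) * \<theta>
           \<and> mu_norm_sq N mu (Delta_of N mu P V) \<le> (8*C' + 4 + 12*(C'+1)^2) * \<theta>^2 * K)"
    proof (intro allI impI)
      fix N :: nat and mu :: "nat \<Rightarrow> real" and P Ph :: "nat \<Rightarrow> nat \<Rightarrow> real" and c' \<theta> :: real
      assume H: "prob_vec N mu
     \<and> (\<forall>k<N. 1 / (C * real N) \<le> mu k \<and> mu k \<le> C / real N)
     \<and> stoch_fix N mu P
     \<and> mu_norm_sq N mu P - vec_norm_sq N mu \<ge> vec_norm_sq N mu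
     \<and> stoch_fix N mu Ph
     \<and> mu_inner N mu Ph P \<ge> 2 * vec_norm_sq N mu
     \<and> 0 < c' \<and> c' \<le> C'
     \<and> c' * mu_norm_sq N mu P \<le> mu_norm_sq N mu Ph
     \<and> mu_norm_sq N mu Ph \<le> C' * mu_norm_sq N mu P
     \<and> 0 < \<theta> \<and> \<theta> < 1"
      have R: "(1/C^2) * \<theta> / (real N * K_of N mu P) \<le> alpha_of N mu P (\<lambda>i k. \<theta> * Ph i k + (1 - \<theta>) * mu i)
     \<and> alpha_of N mu P (\<lambda>i k. \<theta> * Ph i k + (1 - \<theta>) * mu i) \<le> (C'+1) * \<theta>
     \<and> mu_norm_sq N mu (Delta_of N mu P (\<lambda>i k. \<theta> * Ph i k + (1 - \<theta>) * mu i)) \<le> (8*C' + 4 + 12*(C'+1)^2) * \<theta>^2 * K_of N mu P"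
        using H apply (elim conjE)
        apply (rule main[of C N mu P Ph c' C' \<theta>])
        using assms(1) apply assumption
        apply assumption+
        apply (rule refl)
        done
      show "let V = (\<lambda>i k. \<theta> * Ph i k + (1 - \<theta>) * mu i);
              K = K_of N mu P;
              a = alpha_of N mu P V
          in (1/C^2) * \<theta> / (real N * K) \<le> a \<and> a \<le> (C'+1) * \<theta>
           \<and> mu_norm_sq N mu (Delta_of N mu P V) \<le> (8*C' + 4 + 12*(C'+1)^2) * \<theta>^2 * K"
        unfolding Let_def by (rule R)
    qed
    ultimately show ?thesis
      apply -
      apply (rule exI[of _ "1/C^2"], rule exI[of _ "C'+1"], rule exI[of _ "8*C' + 4 + 12*(C'+1)^2"])
      apply (intro conjI)
      apply assumption+
      done
  qed

end
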